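(* Let $Q$ be a convex quadrilateral with vertices $0,1,z,w$ in counterclockwise order, and let $X\in(0,\infty)$. Then the equation $$-\frac{(1-u)(w-u)}{(0-u)(z-u)}=X$$ in the unknown $u\in\mathbb{C}$ has two solutions counted with multiplicity, and both lie in the interior of $Q$. *)

theory Defs
  imports "HOL-Analysis.Analysis" "HOL-Computational_Algebra.Polynomial"
begin

definition left_turn :: "complex \<Rightarrow> complex \<Rightarrow> complex \<Rightarrow> bool" where
  "left_turn a b c \<longleftrightarrow> Im (cnj (b - a) * (c - b)) > 0"

definition ccw_convex_quad :: "complex \<Rightarrow> complex \<Rightarrow> complex \<Rightarrow> complex \<Rightarrow> bool" where
  "ccw_convex_quad a b c d \<longleftrightarrow>
     left_turn a b c \<and> left_turn b c d \<and> left_turn c d a \<and> left_turn d a b"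

end

theory Submission
  imports Defs "HOL-Computational_Algebra.Fundamental_Theorem_Algebra"
begin

lemma signs_key:
  fixes a b c d x y X :: real
  assumes hb: "b > 0" and hK2: "(a-1)*(d-b) - b*(c-a) > 0" and hK3: "a*d-b*c > 0" and hd: "d > 0"
    and hX: "X > 0"
    and e1: "x^2-y^2 - (1+c)*x + d*y + c + X*(x^2-y^2 - (a*x - b*y)) = 0"
    and e2: "2*x*y - (1+c)*y - d*x + d + X*(2*x*y - (a*y + b*x)) = 0"
    and hN: "(x-c)^2+(y-d)^2 > 0" and hM: "x^2+y^2 > 0" and hM': "(x-a)^2+(y-b)^2 > 0"
  shows "y > 0 \<and> (a-1)*y - b*(x-1) > 0 \<and> (c-a)*(y-b) - (d-b)*(x-a) > 0 \<and> d*x-c*y > 0"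
proof -
  define L2 where "L2 = (a-1)*y - b*(x-1)"
  define L3 where "L3 = (c-a)*(y-b) - (d-b)*(x-a)"
  define L4 where "L4 = d*x-c*y"
  define N where "N = (x-c)^2+(y-d)^2"
  define M where "M = x^2+y^2"
  define M' where "M' = (x-a)^2+(y-b)^2"
  have r1: "y*N = X*M*L3" unfolding N_def M_def L3_def using e1 e2 by algebra
  have r2: "L2*N = X*M'*L4" unfolding N_def M'_def L2_def L4_def using e1 e2 by algebra
  have rel: "((a*d-b*c)*((a-1)*(d-b) - b*(c-a)))*y + (b*d)*L3 = (d*(a*d-b*c))*L2 + (b*((a-1)*(d-b) - b*(c-a)))*L4"
    unfolding L2_def L3_def L4_def by algebra
  have sum: "y + L2 + L3 + L4 = b + (a*d - b*c)"
    unfolding L2_def L3_def L4_def by algebra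
  have XM: "X*M > 0" using hX hM M_def by simp
  have XM': "X*M' > 0" using hX hM' M'_def by simp
  have N0: "N > 0" using hN N_def by simp
  have s1: "y > 0 \<longleftrightarrow> L3 > 0"
  proof -
    have "y > 0 \<longleftrightarrow> y*N > 0" using N0 by (simp add: zero_less_mult_iff)
    also have "\<dots> \<longleftrightarrow> L3 > 0" using r1 XM by (metis mult_pos_pos zero_less_mult_pos)
    finally show ?thesis .
  qed
  have s2: "L2 > 0 \<longleftrightarrow> L4 > 0"
  proof -
    have "L2 > 0 \<longleftrightarrow> L2*N > 0" using N0 by (simp add: zero_less_mult_iff)
    also have "\<dots> \<longleftrightarrow> L4 > 0" using r2 XM' by (metis mult_pos_pos zero_less_mult_pos)
    finally show ?thesis .
  qed
  define c1 where "c1 = (a*d-b*c)*((a-1)*(d-b) - b*(c-a))"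
  define c3 where "c3 = b*d"
  define c2 where "c2 = d*(a*d-b*c)"
  define c4 where "c4 = b*((a-1)*(d-b) - b*(c-a))"
  have pc: "c1 > 0" "c2 > 0" "c3 > 0" "c4 > 0"
    unfolding c1_def c2_def c3_def c4_def using hb hd hK2 hK3 by auto
  have rel': "c1*y + c3*L3 = c2*L2 + c4*L4" using rel unfolding c1_def c2_def c3_def c4_def .
  have "y > 0 \<and> L2 > 0 \<and> L3 > 0 \<and> L4 > 0"
  proof (cases "y > 0")
    case True
    hence "L3 > 0" using s1 by simp
    hence "c1*y + c3*L3 > 0" using True pc by (simp add: add_pos_pos)
    hence pos: "c2*L2 + c4*L4 > 0" using rel' by simp
    have "L2 > 0"
    proof (rule ccontr)
      assume "\<not> L2 > 0"
      hence "L2 \<le> 0" "L4 \<le> 0" using s2 by auto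
      hence "c2*L2 \<le> 0" "c4*L4 \<le> 0" using pc by (auto simp: mult_nonneg_nonpos)
      thus False using pos by simp
    qed
    thus ?thesis using True \<open>L3 > 0\<close> s2 by simp
  next
    case False
    hence "L3 \<le> 0" "y \<le> 0" using s1 by auto
    hence "c1*y \<le> 0" "c3*L3 \<le> 0" using pc by (auto simp: mult_nonneg_nonpos)
    hence np: "c2*L2 + c4*L4 \<le> 0" using rel' by simp
    have "\<not> L2 > 0"
    proof
      assume "L2 > 0"
      hence "L4 > 0" using s2 by simp
      hence "c2*L2 + c4*L4 > 0" using \<open>L2 > 0\<close> pc by (simp add: add_pos_pos)
      thus False using np by simp
    qed
    hence "L2 \<le> 0" "L4 \<le> 0" using s2 by auto
    thus ?thesis using sum \<open>L3 \<le> 0\<close> \<open>y \<le> 0\<close> hb hK3 by linarith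
  qed
  thus ?thesis unfolding L2_def L3_def L4_def by simp
qed


lemma in_hull_quad:
  fixes a b c d x y :: real
  assumes hb: "b > 0" and hK3: "a*d-b*c > 0"
    and h1: "y > 0" and h2: "(a-1)*y - b*(x-1) > 0" and h3: "(c-a)*(y-b) - (d-b)*(x-a) > 0"
    and h4: "d*x-c*y > 0"
  shows "Complex x y \<in> convex hull {0, 1, Complex a b, Complex c d}"
proof (cases "a*y - b*x \<le> 0")
  case True
  let ?u = "((a-1)*y - b*(x-1))/b" and ?v = "(x*b - y*a)/b" and ?w = "y/b"
  have "Complex x y = ?u *\<^sub>R 0 + ?v *\<^sub>R 1 + ?w *\<^sub>R Complex a b"
    using hb by (simp add: complex_eq_iff scaleR_conv_of_real field_simps)
  moreover have "0 \<le> ?u" "0 \<le> ?v" "0 \<le> ?w" "?u + ?v + ?w = 1"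
    using hb h1 h2 True by (auto simp: field_simps)
  ultimately have "Complex x y \<in> convex hull {0, 1, Complex a b}"
    unfolding convex_hull_3 by blast
  moreover have "convex hull {0, 1, Complex a b} \<subseteq> convex hull {0, 1, Complex a b, Complex c d}"
    by (rule hull_mono) auto
  ultimately show ?thesis by blast
next
  case False
  let ?K = "a*d-b*c"
  let ?u = "((c-a)*(y-b) - (d-b)*(x-a))/?K" and ?v = "(d*x-c*y)/?K" and ?w = "(a*y - b*x)/?K"
  have "Complex x y = ?u *\<^sub>R 0 + ?v *\<^sub>R Complex a b + ?w *\<^sub>R Complex c d"
  proof -
    have K0: "?K \<noteq> 0" using hK3 by simp
    have ex: "(d*x-c*y)*a + (a*y-b*x)*c = x*?K" "(d*x-c*y)*b + (a*y-b*x)*d = y*?K" by algebra+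
    have "?v*a + ?w*c = x" "?v*b + ?w*d = y"
      using ex K0 by (simp_all add: add_divide_distrib[symmetric] divide_simps)
    thus ?thesis by (simp add: complex_eq_iff scaleR_conv_of_real)
  qed
  moreover have "0 \<le> ?u" "0 \<le> ?v" "0 \<le> ?w"
    using hK3 h3 h4 False by (auto simp: field_simps)
  moreover have "?u + ?v + ?w = 1"
  proof -
    have "((c-a)*(y-b) - (d-b)*(x-a)) + (d*x-c*y) + (a*y - b*x) = ?K" by algebra
    thus ?thesis using hK3 by (simp add: add_divide_distrib[symmetric])
  qed
  ultimately have "Complex x y \<in> convex hull {0, Complex a b, Complex c d}"
    unfolding convex_hull_3 by blast
  moreover have "convex hull {0, Complex a b, Complex c d} \<subseteq> convex hull {0, 1, Complex a b, Complex c d}"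
    by (rule hull_mono) auto
  ultimately show ?thesis by blast
qed


theorem mainTheorem2:
  fixes z w :: complex and X :: real
  assumes "ccw_convex_quad 0 1 z w" and "X > 0"
  shows "let p = [:1, -1:] * [:w, -1:] + smult (complex_of_real X) ([:0, -1:] * [:z, -1:]);
             S = {u :: complex. - ((1 - u) * (w - u)) / ((0 - u) * (z - u)) = complex_of_real X}
         in (\<forall>u. u \<in> S \<longleftrightarrow> poly p u = 0) \<and> degree p = 2 \<and>
            (\<Sum>u\<in>S. order u p) = 2 \<and>
            S \<subseteq> interior (convex hull {0, 1, z, w})"
proof -
  obtain a b where z: "z = Complex a b" by (cases z)
  obtain c d where w: "w = Complex c d" by (cases w)
  have hb: "b > 0" and hK2: "(a-1)*(d-b) - b*(c-a) > 0" and hK3: "a*d-b*c > 0" and hd: "d > 0"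
    using assms(1) unfolding ccw_convex_quad_def left_turn_def z w
    by (auto simp: algebra_simps)
  have hX: "X > 0" by fact
  define p where "p = [:1, -1:] * [:w, -1:] + smult (complex_of_real X) ([:0, -1:] * [:z, -1:])"
  define S where "S = {u :: complex. - ((1 - u) * (w - u)) / ((0 - u) * (z - u)) = complex_of_real X}"
  have polyp: "poly p u = (1-u)*(w-u) + complex_of_real X * ((0-u)*(z-u))" for u
    unfolding p_def by (simp add: algebra_simps)
  have w0: "w \<noteq> 0" using hd w by (auto simp: complex_eq_iff)
  have zw: "z \<noteq> w" using hK3 z w by (auto simp: complex_eq_iff)
  have z1: "z \<noteq> 1" using hb z by (auto simp: complex_eq_iff)
  have SP: "u \<in> S \<longleftrightarrow> poly p u = 0" for u
  proof (cases "(0 - u) * (z - u) = 0")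
    case True
    hence "u = 0 \<or> u = z" by auto
    hence "poly p u \<noteq> 0" using w0 zw z1 by (auto simp: polyp)
    moreover have "u \<notin> S" using True hX unfolding S_def by auto
    ultimately show ?thesis by simp
  next
    case False
    have "u \<in> S \<longleftrightarrow> - ((1 - u) * (w - u)) = complex_of_real X * ((0 - u) * (z - u))"
      unfolding S_def using False by (auto simp: field_simps)
    also have "\<dots> \<longleftrightarrow> poly p u = 0" unfolding polyp by (auto simp: algebra_simps)
    finally show ?thesis .
  qed
  have pc: "p = [:w, -1 - w - complex_of_real X * z, 1 + complex_of_real X:]"
    unfolding p_def by (simp add: algebra_simps)
  have X1: "1 + complex_of_real X \<noteq> 0"
  proof
    assume "1 + complex_of_real X = 0"
    hence "Re (1 + complex_of_real X) = 0" by simp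
    thus False using hX by simp
  qed
  have deg: "degree p = 2" unfolding pc using X1 by simp
  have p0: "p \<noteq> 0" using deg by auto
  have Seq: "S = {u. poly p u = 0}" using SP by auto
  have sumo: "(\<Sum>u\<in>S. order u p) = 2"
  proof -
    have "(\<Sum>u\<in>S. order u p) = (\<Sum>u\<in>set_mset (proots p). count (proots p) u)"
      using p0 Seq by simp
    also have "\<dots> = size (proots p)" by (simp add: size_multiset_overloaded_eq)
    also have "\<dots> = 2" using deg by (simp add: size_proots_complex)
    finally show ?thesis .
  qed
  define H where "H = {u::complex. 0 < Im u} \<inter> {u. 0 < (a-1)*Im u - b*(Re u-1)}
     \<inter> {u. 0 < (c-a)*(Im u-b) - (d-b)*(Re u-a)} \<inter> {u. 0 < d*Re u-c*Im u}"
  have Hopen: "open H" unfolding H_def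
    by (intro open_Int open_Collect_less continuous_intros)
  have Hsub: "H \<subseteq> convex hull {0, 1, z, w}"
  proof
    fix u assume "u \<in> H"
    then obtain x y where u: "u = Complex x y" and hs: "y > 0" "(a-1)*y - b*(x-1) > 0"
      "(c-a)*(y-b) - (d-b)*(x-a) > 0" "d*x-c*y > 0" unfolding H_def by (cases u) auto
    show "u \<in> convex hull {0, 1, z, w}"
      unfolding u z w by (rule in_hull_quad[OF hb hK3 hs])
  qed
  have SH: "S \<subseteq> H"
  proof
    fix u assume uS: "u \<in> S"
    obtain x y where u: "u = Complex x y" by (cases u)
    have pu: "poly p u = 0" using SP uS by simp
    have u0: "u \<noteq> 0" using pu w0 by (auto simp: polyp)
    have uz: "u \<noteq> z" using pu zw z1 by (auto simp: polyp)
    have uw: "u \<noteq> w"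
    proof
      assume "u = w"
      hence "complex_of_real X * ((0-w)*(z-w)) = 0" using pu by (simp add: polyp)
      thus False using hX w0 zw by auto
    qed
    have e: "(1-u)*(w-u) + complex_of_real X * ((0-u)*(z-u)) = 0" using pu by (simp add: polyp)
    have e1: "x^2-y^2 - (1+c)*x + d*y + c + X*(x^2-y^2 - (a*x - b*y)) = 0"
      using arg_cong[OF e, of Re] unfolding u z w by (simp add: algebra_simps power2_eq_square)
    have e2: "2*x*y - (1+c)*y - d*x + d + X*(2*x*y - (a*y + b*x)) = 0"
      using arg_cong[OF e, of Im] unfolding u z w by (simp add: algebra_simps power2_eq_square)
    have nz: "\<And>p q::real. p \<noteq> 0 \<or> q \<noteq> 0 \<Longrightarrow> p^2 + q^2 > 0"
      by (metis sum_power2_gt_zero_iff)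
    have hN: "(x-c)^2+(y-d)^2 > 0" using uw u w by (intro nz) auto
    have hM: "x^2+y^2 > 0" using u0 u by (intro nz) (auto simp: complex_eq_iff)
    have hM': "(x-a)^2+(y-b)^2 > 0" using uz u z by (intro nz) auto
    show "u \<in> H" using signs_key[OF hb hK2 hK3 hd hX e1 e2 hN hM hM'] unfolding H_def u by simp
  qed
  have "S \<subseteq> interior (convex hull {0, 1, z, w})"
    using SH Hsub Hopen interior_maximal by blast
  thus ?thesis unfolding Let_def p_def[symmetric] S_def[symmetric] using SP deg sumo by blast
qed

end
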